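(* Let $u:[0,b)\to(0,\infty)$ be a solution of $\frac{u''}{1+(u')^2}=\frac{xu'}{2}-\frac u2+\frac{n-1}{u}$ with $u(0)<\sqrt{2(n-1)}$ and $u'(0)=0$. Then $u$ is strictly convex on $[0,b)$.
   Context: $n\ge2$ is a fixed integer. *)

theory Defs
  imports "HOL-Analysis.Analysis" "HOL-Library.Extended_Real"
begin

definition strictly_convex_on :: "real set \<Rightarrow> (real \<Rightarrow> real) \<Rightarrow> bool" where
  "strictly_convex_on S f \<longleftrightarrow>
     (\<forall>x\<in>S. \<forall>y\<in>S. x \<noteq> y \<longrightarrow> (\<forall>t::real. 0 < t \<and> t < 1 \<longrightarrow>
        f ((1 - t) * x + t * y) < (1 - t) * f x + t * f y))"

end

theory Submission
  imports Defs
begin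

theorem lemma2p9:
  fixes n :: nat and b :: ereal and u u' u'' :: "real \<Rightarrow> real"
  assumes n: "n \<ge> 2"
    and b: "b > 0"
    and deriv1: "\<And>x. 0 \<le> x \<Longrightarrow> ereal x < b \<Longrightarrow>
        (u has_real_derivative u' x) (at x within {x. 0 \<le> x \<and> ereal x < b})"
    and deriv2: "\<And>x. 0 \<le> x \<Longrightarrow> ereal x < b \<Longrightarrow>
        (u' has_real_derivative u'' x) (at x within {x. 0 \<le> x \<and> ereal x < b})"
    and pos: "\<And>x. 0 \<le> x \<Longrightarrow> ereal x < b \<Longrightarrow> u x > 0"
    and ode: "\<And>x. 0 \<le> x \<Longrightarrow> ereal x < b \<Longrightarrow>
        u'' x / (1 + (u' x)\<^sup>2) = x * u' x / 2 - u x / 2 + (real n - 1) / u x"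
    and init: "u 0 < sqrt (2 * (real n - 1))"
    and init': "u' 0 = 0"
  shows "strictly_convex_on {x. 0 \<le> x \<and> ereal x < b} u"
proof -
  define S where "S = {x. 0 \<le> x \<and> ereal x < b}"
  define c where "c = real n - 1"
  have c1: "c \<ge> 1" using n unfolding c_def by simp
  define D where "D x = 2*c - (u x)^2 + x*u x*u' x" for x
  define E where "E x = x*(1+(u' x)^2)*D x/2 - u' x*u x + x*(u' x)^2" for x
  define q where "q x = (1+(u' x)^2)*D x/(2*u x)" for x
  have S0: "0 \<in> S" using b unfolding S_def by (simp add: zero_ereal_def)
  have down: "y \<in> S" if "x \<in> S" "0 \<le> y" "y \<le> x" for x y
  proof -
    have "ereal y \<le> ereal x" using that by simp
    moreover have "ereal x < b" using that(1) unfolding S_def by simp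
    ultimately have "ereal y < b" by (rule le_less_trans)
    then show ?thesis using that unfolding S_def by simp
  qed
  have upos: "u x > 0" if "x \<in> S" for x using pos that unfolding S_def by auto
  have u2: "u'' x = q x" if "x \<in> S" for x
  proof -
    have "u'' x / (1 + (u' x)\<^sup>2) = x * u' x / 2 - u x / 2 + c / u x"
      using ode that unfolding S_def c_def by auto
    moreover have "1 + (u' x)\<^sup>2 > 0" by (simp add: add_pos_nonneg)
    ultimately show ?thesis using upos[OF that] unfolding q_def D_def
      by (simp add: field_simps power2_eq_square)
  qed
  have atS: "at x within S = at x" if hx: "0 < x" "ereal x < b" for x
  proof -
    obtain r where r: "x < r" "{0<..<r} \<subseteq> S"
    proof (cases b)
      case (real r) then show ?thesis using hx by (intro that[of r]) (auto simp: S_def)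
    next
      case PInf then show ?thesis by (intro that[of "x+1"]) (auto simp: S_def)
    next
      case MInf then show ?thesis using b by simp
    qed
    show ?thesis by (rule at_within_open_subset[of x "{0<..<r}"]) (use r hx in auto)
  qed
  have du: "(u has_real_derivative u' x) (at x)" and du': "(u' has_real_derivative u'' x) (at x)"
    if "0 < x" "ereal x < b" for x
    using deriv1[of x] deriv2[of x] atS[OF that] that unfolding S_def by auto
  have contu: "continuous_on {0..y} u" "continuous_on {0..y} u'" if "y \<in> S" for y
  proof -
    have sub: "{0..y} \<subseteq> S" using down that by auto
    have "continuous_on S u" "continuous_on S u'"
      unfolding continuous_on_eq_continuous_within
      using deriv1 deriv2 DERIV_continuous unfolding S_def by blast+
    then show "continuous_on {0..y} u" "continuous_on {0..y} u'"
      using continuous_on_subset sub by blast+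
  qed
  have dD: "(D has_real_derivative E x) (at x)" if hx: "0<x" "ereal x < b" for x
  proof -
    have xS: "x \<in> S" using hx unfolding S_def by simp
    have h: "(D has_real_derivative (- (2 * u x * u' x) + ((u x + x*u' x)*u' x + x*u x*u'' x))) (at x)"
      unfolding D_def[abs_def]
      by (rule derivative_eq_intros refl du[OF hx] du'[OF hx])+ (simp add: algebra_simps)
    have "x*u x*u'' x = x*(1+(u' x)^2)*D x/2"
      using u2[OF xS] upos[OF xS] unfolding q_def by (simp add: field_simps)
    then have "- (2 * u x * u' x) + ((u x + x*u' x)*u' x + x*u x*u'' x) = E x"
      unfolding E_def by (simp add: algebra_simps power2_eq_square)
    then show ?thesis using h by simp
  qed
  have dE: "(E has_real_derivative (x*(1+(u' x)^2)/2*E x + x*u' x*q x*(D x+2))) (at x)"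
    if hx: "0<x" "ereal x < b" for x
  proof -
    have xS: "x \<in> S" using hx unfolding S_def by simp
    define e where "e = E x"
    have h: "(E has_real_derivative
       (((1+(u' x)^2)*D x/2 + x*(2*u' x*u'' x)*D x/2 + x*(1+(u' x)^2)*e/2)
        - (u'' x*u x + u' x*u' x) + ((u' x)^2 + x*(2*u' x*u'' x)))) (at x)"
      unfolding E_def[abs_def]
      by (auto intro!: derivative_eq_intros du[OF hx] du'[OF hx] dD[OF hx]
         simp: e_def field_simps power2_eq_square)
    have "(((1+(u' x)^2)*D x/2 + x*(2*u' x*u'' x)*D x/2 + x*(1+(u' x)^2)*e/2)
        - (u'' x*u x + u' x*u' x) + ((u' x)^2 + x*(2*u' x*u'' x)))
        = x*(1+(u' x)^2)/2*E x + x*u' x*q x*(D x+2)"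
      unfolding u2[OF xS] q_def e_def using upos[OF xS]
      by (simp add: field_simps power2_eq_square)
    then show ?thesis using h by simp
  qed
  have contD: "continuous_on {0..y} D" "continuous_on {0..y} E" if "y\<in>S" for y
    using contu[OF that] unfolding D_def[abs_def] E_def[abs_def]
    by (auto intro!: continuous_intros)
  have E0: "E 0 = 0" unfolding E_def using init' by simp
  have D0: "D 0 > 0"
  proof -
    have "(u 0)^2 < (sqrt (2*c))^2"
      using init upos[OF S0] unfolding c_def by (intro power_strict_mono) auto
    also have "\<dots> = 2*c" using c1 by simp
    finally show ?thesis unfolding D_def by simp
  qed
  have qpos: "q t > 0" if "t \<in> S" "D t > 0" for t
    using upos[OF that(1)] that(2) unfolding q_def
    by (intro divide_pos_pos mult_pos_pos) (auto simp: add_pos_nonneg)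
  have pnonneg: "u' s \<ge> 0" if wS: "w\<in>S" and Dp: "\<forall>t\<in>{0..w}. D t > 0" and s: "s \<in> {0..w}" for w s
  proof -
    have sS: "s \<in> S" using down wS s by auto
    have "u' 0 \<le> u' s"
    proof (rule DERIV_nonneg_imp_increasing_open[of 0 s u'])
      show "0 \<le> s" using s by simp
      show "continuous_on {0..s} u'" using contu[OF sS] by simp
      fix t assume t: "0 < t" "t < s"
      have tS: "t \<in> S" using down[OF sS, of t] t by simp
      have "ereal t < b" using tS unfolding S_def by simp
      then have "DERIV u' t :> u'' t" using du' t by simp
      moreover have "u'' t \<ge> 0" using u2[OF tS] qpos[OF tS] Dp t s by fastforce
      ultimately show "\<exists>y. DERIV u' t :> y \<and> 0 \<le> y" by blast
    qed
    then show ?thesis using init' by simp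
  qed
  have gron: "E w \<ge> 0" if wS: "w\<in>S" and Dp: "\<forall>t\<in>{0..w}. D t > 0" for w
  proof (rule ccontr)
    assume "\<not> E w \<ge> 0"
    then have Ew: "E w < 0" by simp
    have w0: "w > 0" using wS Ew E0 unfolding S_def by (cases "w = 0") auto
    have "continuous_on {0..w} (\<lambda>t. t*(1+(u' t)^2)/2)"
      using contu[OF wS] by (auto intro!: continuous_intros)
    then obtain a0 where "a0 \<in> {0..w}" and a0: "\<forall>t\<in>{0..w}. t*(1+(u' t)^2)/2 \<le> a0*(1+(u' a0)^2)/2"
      using continuous_attains_sup[of "{0..w}" "\<lambda>t. t*(1+(u' t)^2)/2"] w0 by auto
    define A where "A = a0*(1+(u' a0)^2)/2"
    have A: "t*(1+(u' t)^2)/2 \<le> A" if "t\<in>{0..w}" for t using a0 that unfolding A_def by blast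
    define G where "G t = E t * exp (-(A+1)*t)" for t
    have "continuous_on {0..w} G" using contD[OF wS] unfolding G_def[abs_def]
      by (auto intro!: continuous_intros)
    then obtain m where m: "m \<in> {0..w}" and mmin: "\<forall>t\<in>{0..w}. G m \<le> G t"
      using continuous_attains_inf[of "{0..w}" G] w0 by auto
    have "G m \<le> G w" using mmin w0 by auto
    also have "G w < 0" unfolding G_def using Ew by (simp add: mult_neg_pos)
    finally have Gm: "G m < 0" .
    have Em: "E m < 0" using Gm unfolding G_def by (simp add: mult_less_0_iff)
    have m0: "m > 0" using Gm m E0 unfolding G_def by (cases "m = 0") auto
    have mS: "m \<in> S" using down[OF wS, of m] m by simp
    have mb: "ereal m < b" using mS unfolding S_def by simp
    define a where "a = m*(1+(u' m)^2)/2"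
    define bb where "bb = m*u' m*q m*(D m+2)"
    have "(G has_real_derivative ((a*E m + bb)*exp (-(A+1)*m) + E m*(exp (-(A+1)*m) * (-(A+1))))) (at m)"
      unfolding G_def[abs_def] a_def bb_def
      by (auto intro!: derivative_eq_intros dE[OF m0 mb])
    moreover have "(a*E m + bb)*exp (-(A+1)*m) + E m*(exp (-(A+1)*m) * (-(A+1)))
        = ((a - A - 1)*E m + bb) * exp (-(A+1)*m)" by (simp add: algebra_simps)
    moreover have "(a - A - 1)*E m + bb > 0"
    proof -
      have Dm: "D m > 0" using Dp m by blast
      have "a \<le> A" using A m unfolding a_def by simp
      then have "(a - A - 1)*E m > 0" using Em by (simp add: mult_neg_neg)
      moreover have "bb \<ge> 0" unfolding bb_def
        using m0 pnonneg[OF wS Dp m] qpos[OF mS Dm] Dm by (auto intro!: mult_nonneg_nonneg)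
      ultimately show ?thesis by simp
    qed
    ultimately have "DERIV G m :> ((a - A - 1)*E m + bb) * exp (-(A+1)*m)"
      and "((a - A - 1)*E m + bb) * exp (-(A+1)*m) > 0" by auto
    then obtain d where d: "d > 0" "\<forall>h>0. h < d \<longrightarrow> G (m - h) < G m"
      using DERIV_pos_inc_left by blast
    define h where "h = min (d/2) m"
    have "G (m - h) < G m" using d m0 unfolding h_def by auto
    moreover have "m - h \<in> {0..w}" using m m0 d unfolding h_def by auto
    ultimately show False using mmin by fastforce
  qed
  have Dpos: "D y > 0" if yS: "y \<in> S" for y
  proof (rule ccontr)
    assume "\<not> D y > 0"
    then have Dy: "D y \<le> 0" by simp
    define Z where "Z = {t \<in> {0..y}. D t \<le> 0}"
    have clZ: "closed Z" unfolding Z_def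
      using continuous_on_closed_Collect_le[of "{0..y}" D "\<lambda>_. 0"] contD[OF yS] by auto
    have y0: "0 \<le> y" using yS unfolding S_def by simp
    have yZ: "y \<in> Z" unfolding Z_def using Dy y0 by simp
    have bdd: "bdd_below Z" unfolding Z_def by (rule bdd_belowI[of _ 0]) auto
    define z where "z = Inf Z"
    have zZ: "z \<in> Z" unfolding z_def using closed_contains_Inf[OF _ bdd clZ] yZ by blast
    have below: "D t > 0" if t: "0 \<le> t" "t < z" for t
    proof (rule ccontr)
      assume "\<not> D t > 0"
      then have "t \<in> Z" using t zZ unfolding Z_def by auto
      then have "z \<le> t" unfolding z_def using bdd by (rule cInf_lower)
      then show False using t by simp
    qed
    have z0: "z > 0" using zZ D0 unfolding Z_def by (cases "z = 0") auto
    have zS: "z \<in> S" using down[OF yS, of z] zZ unfolding Z_def by auto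
    have "D 0 \<le> D z"
    proof (rule DERIV_nonneg_imp_increasing_open[of 0 z D])
      show "0 \<le> z" using z0 by simp
      show "continuous_on {0..z} D" using contD[OF zS] by simp
      fix t assume t: "0 < t" "t < z"
      have tS: "t \<in> S" using down[OF zS, of t] t by simp
      have tb: "ereal t < b" using tS unfolding S_def by simp
      have "E t \<ge> 0" using gron[OF tS] below t by auto
      then show "\<exists>y. DERIV D t :> y \<and> 0 \<le> y" using dD[OF t(1) tb] by blast
    qed
    then show False using D0 zZ unfolding Z_def by simp
  qed
  have inc: "u' s < u' t" if sS: "s \<in> S" and tS: "t \<in> S" and st: "s < t" for s t
  proof (rule DERIV_pos_imp_increasing_open[OF st])
    show "continuous_on {s..t} u'"
      by (rule continuous_on_subset[OF contu(2)[OF tS]]) (use sS in \<open>auto simp: S_def\<close>)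
    fix r assume r: "s < r" "r < t"
    have r0: "0 < r" using sS r unfolding S_def by simp
    have rS: "r \<in> S" using down[OF tS, of r] r r0 by simp
    have rb: "ereal r < b" using rS unfolding S_def by simp
    show "\<exists>y. DERIV u' r :> y \<and> 0 < y"
      using du'[OF r0 rb] u2[OF rS] qpos[OF rS Dpos[OF rS]] by auto
  qed
  have mvt: "\<exists>l. s < l \<and> l < t \<and> u t - u s = (t - s) * u' l"
    if sS: "s \<in> S" and tS: "t \<in> S" and st: "s < t" for s t
  proof -
    have "\<exists>l z. s < z \<and> z < t \<and> DERIV u z :> l \<and> u t - u s = (t - s) * l"
    proof (rule MVT[OF st])
      show "continuous_on {s..t} u"
        by (rule continuous_on_subset[OF contu(1)[OF tS]]) (use sS in \<open>auto simp: S_def\<close>)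
      fix r assume r: "s < r" "r < t"
      have r0: "0 < r" using sS r unfolding S_def by simp
      have rS: "r \<in> S" using down[OF tS, of r] r r0 by simp
      have rb: "ereal r < b" using rS unfolding S_def by simp
      show "u differentiable (at r)" using du[OF r0 rb] real_differentiable_def by blast
    qed
    then obtain l z where z: "s < z" "z < t" "DERIV u z :> l" "u t - u s = (t - s) * l" by blast
    have z0: "0 < z" using sS z unfolding S_def by simp
    have zS: "z \<in> S" using down[OF tS, of z] z z0 by simp
    have zb: "ereal z < b" using zS unfolding S_def by simp
    have "l = u' z" using DERIV_unique[OF z(3) du[OF z0 zb]] .
    then show ?thesis using z by blast
  qed
  have key: "u ((1-t)*x + t*y) < (1-t)*u x + t*u y"
    if xS: "x \<in> S" and yS: "y \<in> S" and xy: "x < y" and t: "0 < t" "t < 1" for x y t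
  proof -
    define z where "z = (1-t)*x + t*y"
    have zx: "z - x = t*(y-x)" and yz: "y - z = (1-t)*(y-x)" unfolding z_def by (simp_all add: algebra_simps)
    have xz: "x < z" using zx t xy by (smt (verit) mult_pos_pos)
    have zy: "z < y" using yz t xy by (smt (verit) mult_pos_pos)
    have zS: "z \<in> S" using down[OF yS, of z] xz zy xS unfolding S_def by simp
    obtain l1 where l1: "x < l1" "l1 < z" "u z - u x = (z - x) * u' l1" using mvt[OF xS zS xz] by blast
    obtain l2 where l2: "z < l2" "l2 < y" "u y - u z = (y - z) * u' l2" using mvt[OF zS yS zy] by blast
    have l1S: "l1 \<in> S" using down[OF zS, of l1] l1 xS unfolding S_def by simp
    have l2S: "l2 \<in> S" using down[OF yS, of l2] l2 zS unfolding S_def by simp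
    have lt: "u' l1 < u' l2" using inc[OF l1S l2S] l1 l2 by simp
    have k: "t*(1-t)*(y-x) > 0" using t xy by simp
    have "(1-t)*(u z - u x) = (t*(1-t)*(y-x)) * u' l1" using l1(3) zx by simp
    also have "\<dots> < (t*(1-t)*(y-x)) * u' l2" using mult_strict_left_mono[OF lt k] .
    also have "\<dots> = t*(u y - u z)" using l2(3) yz by simp
    finally show ?thesis unfolding z_def by (simp add: algebra_simps)
  qed
  show ?thesis unfolding strictly_convex_on_def S_def[symmetric]
  proof (intro ballI impI allI)
    fix x y t :: real assume xS: "x \<in> S" and yS: "y \<in> S" and ne: "x \<noteq> y" and t: "0 < t \<and> t < 1"
    show "u ((1 - t) * x + t * y) < (1 - t) * u x + t * u y"
    proof (cases "x < y")
      case True then show ?thesis using key xS yS t by blast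
    next
      case False
      then have "y < x" using ne by simp
      then have "u ((1-(1-t))*y + (1-t)*x) < (1-(1-t))*u y + (1-t)*u x" using key[OF yS xS, of "1-t"] t by simp
      then show ?thesis by (simp add: algebra_simps)
    qed
  qed
qed

end
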